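(* Let $X$ be a compact ultrametric space with a finite similarity structure $\mathrm{Sim}_X$ satisfying $|\mathrm{Sim}_X(B_1,B_2)|\le1$ for all balls $B_1,B_2\subseteq X$. Then there is a linear order $\le$ on $X$ such that every $\gamma\in\mathrm{Sim}_X(B_1,B_2)$ is order-preserving, for all balls $B_1,B_2$.
   Context: Balls in $X$ are closed metric balls of positive radius. A *finite similarity structure* $\mathrm{Sim}_X$ assigns to each ordered pair of balls $B_1,B_2$ a finite (possibly empty) set $\mathrm{Sim}_X(B_1,B_2)$ of surjective similarities $B_1\to B_2$ (maps scaling all distances by a fixed positive constant), such that $\mathrm{id}_{B_1}\in\mathrm{Sim}_X(B_1,B_1)$, the sets are closed under inverses and compositions, and if $h\in\mathrm{Sim}_X(B_1,B_2)$ and $B_3\subseteq B_1$ is a ball then $h|_{B_3}\in\mathrm{Sim}_X(B_3,h(B_3))$. *)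

theory Defs
  imports "HOL-Analysis.Analysis" "HOL-Library.FuncSet"
begin

text \<open>The ambient compact ultrametric space X is the whole type 'a.\<close>

definition ultrametric_space :: "'a::metric_space itself \<Rightarrow> bool" where
  "ultrametric_space _ \<longleftrightarrow> (\<forall>x y z::'a. dist x z \<le> max (dist x y) (dist y z))"

definition is_ball :: "'a::metric_space set \<Rightarrow> bool" where
  "is_ball B \<longleftrightarrow> (\<exists>x r. r > 0 \<and> B = cball x r)"

definition similarity :: "'a::metric_space set \<Rightarrow> 'a set \<Rightarrow> ('a \<Rightarrow> 'a) \<Rightarrow> bool" where
  "similarity B1 B2 h \<longleftrightarrow> h \<in> extensional B1 \<and> h ` B1 = B2 \<and>
     (\<exists>c>0. \<forall>x\<in>B1. \<forall>y\<in>B1. dist (h x) (h y) = c * dist x y)"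

definition finite_similarity_structure ::
    "('a::metric_space set \<Rightarrow> 'a set \<Rightarrow> ('a \<Rightarrow> 'a) set) \<Rightarrow> bool" where
  "finite_similarity_structure Sim \<longleftrightarrow>
     (\<forall>B1 B2. is_ball B1 \<and> is_ball B2 \<longrightarrow>
        finite (Sim B1 B2) \<and> (\<forall>h\<in>Sim B1 B2. similarity B1 B2 h)) \<and>
     (\<forall>B1. is_ball B1 \<longrightarrow> restrict id B1 \<in> Sim B1 B1) \<and>
     (\<forall>B1 B2 h. is_ball B1 \<and> is_ball B2 \<and> h \<in> Sim B1 B2 \<longrightarrow>
        restrict (inv_into B1 h) B2 \<in> Sim B2 B1) \<and>
     (\<forall>B1 B2 B3 h g. is_ball B1 \<and> is_ball B2 \<and> is_ball B3 \<and>
        h \<in> Sim B1 B2 \<and> g \<in> Sim B2 B3 \<longrightarrow> compose B1 g h \<in> Sim B1 B3) \<and>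
     (\<forall>B1 B2 B3 h. is_ball B1 \<and> is_ball B2 \<and> is_ball B3 \<and> B3 \<subseteq> B1 \<and>
        h \<in> Sim B1 B2 \<longrightarrow> restrict h B3 \<in> Sim B3 (h ` B3))"

end

theory Submission
  imports Defs
begin

definition rad :: "'a::metric_space set \<Rightarrow> real" where
  "rad D = Sup {dist u v | u v. u \<in> D \<and> v \<in> D}"
definition cls :: "'a::metric_space set \<Rightarrow> 'a \<Rightarrow> 'a set" where
  "cls D u = {v \<in> D. dist u v < rad D}"
definition rep :: "('a::metric_space set \<Rightarrow> 'a set \<Rightarrow> ('a \<Rightarrow> 'a) set) \<Rightarrow> 'a set \<Rightarrow> 'a set" where
  "rep Sim D = (SOME B. is_ball B \<and> Sim B D \<noteq> {})"
definition kmap where "kmap Sim D = the_elem (Sim D (rep Sim D))"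
definition key where "key Sim D u = kmap Sim D ` cls D u"
definition lt where
  "lt Sim L x y \<longleftrightarrow> x \<noteq> y \<and> key Sim (cball x (dist x y)) x \<noteq> key Sim (cball x (dist x y)) y
     \<and> (key Sim (cball x (dist x y)) x, key Sim (cball x (dist x y)) y) \<in> L"

locale ctx =
  fixes Sim :: "'a::metric_space set \<Rightarrow> 'a set \<Rightarrow> ('a \<Rightarrow> 'a) set"
  assumes ultra: "ultrametric_space TYPE('a)"
    and fss: "finite_similarity_structure Sim"
    and crd: "\<And>B1 B2. is_ball B1 \<Longrightarrow> is_ball B2 \<Longrightarrow> card (Sim B1 B2) \<le> 1"
begin

lemma U: "dist x z \<le> max (dist x y) (dist (y::'a) z)"
  using ultra unfolding ultrametric_space_def by blast

lemma sub: assumes "x \<in> cball z s" "t \<le> s" shows "cball (x::'a) t \<subseteq> cball z s"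
proof
  fix u assume "u \<in> cball x t"
  then show "u \<in> cball z s" using U[of z u x] assms by (auto simp: dist_commute)
qed

lemma sub2: assumes "x \<in> cball z s" "y \<in> cball z s" shows "cball (x::'a) (dist x y) \<subseteq> cball z s"
proof -
  have "dist x y \<le> s" using U[of x y z] assms by (auto simp: dist_commute)
  then show ?thesis using sub assms by blast
qed

lemma ball_sub: assumes "is_ball B" "x \<in> B" "y \<in> B" shows "cball (x::'a) (dist x y) \<subseteq> B"
  using assms sub2 unfolding is_ball_def by blast

lemma swap: "cball (x::'a) (dist x y) = cball y (dist x y)"
proof -
  have "y \<in> cball x (dist x y)" "x \<in> cball y (dist x y)" by (auto simp: dist_commute)
  then show ?thesis using sub[of y x "dist x y" "dist x y"] sub[of x y "dist x y" "dist x y"] by auto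
qed

lemma rad_eq: "rad (cball (x::'a) (dist x y)) = dist x y"
  unfolding rad_def
proof (rule cSup_eq_maximum)
  show "dist x y \<in> {dist u v |u v. u \<in> cball x (dist x y) \<and> v \<in> cball x (dist x y)}"
    by (rule CollectI, rule exI[of _ x], rule exI[of _ y]) (auto simp: dist_commute)
next
  fix t assume "t \<in> {dist u v |u v. u \<in> cball x (dist x y) \<and> v \<in> cball x (dist x y)}"
  then obtain u v where "t = dist u v" "dist x u \<le> dist x y" "dist x v \<le> dist x y" by auto
  then show "t \<le> dist x y" using U[of u v x] by (auto simp: dist_commute)
qed

lemma F1: "\<forall>B1 B2. is_ball B1 \<and> is_ball B2 \<longrightarrow>
        finite (Sim B1 B2) \<and> (\<forall>h\<in>Sim B1 B2. similarity B1 B2 h)"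
  using fss unfolding finite_similarity_structure_def by (rule conjunct1)
lemma F2: "\<forall>B1. is_ball B1 \<longrightarrow> restrict id B1 \<in> Sim B1 B1"
  using fss unfolding finite_similarity_structure_def by (elim conjE)
lemma F3: "\<forall>B1 B2 h. is_ball B1 \<and> is_ball B2 \<and> h \<in> Sim B1 B2 \<longrightarrow>
        restrict (inv_into B1 h) B2 \<in> Sim B2 B1"
  using fss unfolding finite_similarity_structure_def by (elim conjE)
lemma F4: "\<forall>B1 B2 B3 h g. is_ball B1 \<and> is_ball B2 \<and> is_ball B3 \<and>
        h \<in> Sim B1 B2 \<and> g \<in> Sim B2 B3 \<longrightarrow> compose B1 g h \<in> Sim B1 B3"
  using fss unfolding finite_similarity_structure_def by (elim conjE)
lemma F5: "\<forall>B1 B2 B3 h. is_ball B1 \<and> is_ball B2 \<and> is_ball B3 \<and> B3 \<subseteq> B1 \<and>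
        h \<in> Sim B1 B2 \<longrightarrow> restrict h B3 \<in> Sim B3 (h ` B3)"
  using fss unfolding finite_similarity_structure_def by (elim conjE)

lemma simB: "is_ball B1 \<Longrightarrow> is_ball B2 \<Longrightarrow> h \<in> Sim B1 B2 \<Longrightarrow> similarity B1 B2 h"
  using F1 by blast

lemma single: assumes "is_ball B1" "is_ball B2" "h \<in> Sim B1 B2" "g \<in> Sim B1 B2" shows "h = g"
proof -
  have "finite (Sim B1 B2)" using F1 assms by blast
  then show ?thesis using crd[OF assms(1,2)] assms(3,4) by (auto simp: card_le_Suc0_iff_eq)
qed

lemma idS: "is_ball B \<Longrightarrow> restrict id B \<in> Sim B B"
  using F2 by blast
lemma invS: "is_ball B1 \<Longrightarrow> is_ball B2 \<Longrightarrow> h \<in> Sim B1 B2 \<Longrightarrow> restrict (inv_into B1 h) B2 \<in> Sim B2 B1"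
  using F3 by blast
lemma compS: "is_ball B1 \<Longrightarrow> is_ball B2 \<Longrightarrow> is_ball B3 \<Longrightarrow> h \<in> Sim B1 B2 \<Longrightarrow> g \<in> Sim B2 B3
   \<Longrightarrow> compose B1 g h \<in> Sim B1 B3"
  using F4 by blast
lemma resS: "is_ball B1 \<Longrightarrow> is_ball B2 \<Longrightarrow> is_ball B3 \<Longrightarrow> B3 \<subseteq> B1 \<Longrightarrow> h \<in> Sim B1 B2
   \<Longrightarrow> restrict h B3 \<in> Sim B3 (h ` B3)"
  using F5 by blast

lemma rep_props: assumes "is_ball D" shows "is_ball (rep Sim D) \<and> Sim (rep Sim D) D \<noteq> {}"
  unfolding rep_def by (rule someI[of _ D]) (use assms idS in blast)

lemma k_in: assumes "is_ball D" shows "kmap Sim D \<in> Sim D (rep Sim D)"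
proof -
  obtain h where "h \<in> Sim (rep Sim D) D" "is_ball (rep Sim D)" using rep_props[OF assms] by blast
  then have "Sim D (rep Sim D) \<noteq> {}" using invS assms by blast
  then obtain g where g: "g \<in> Sim D (rep Sim D)" by blast
  then have "Sim D (rep Sim D) = {g}" using single assms \<open>is_ball (rep Sim D)\<close> by blast
  then show ?thesis unfolding kmap_def by simp
qed

lemma rep_cong: assumes "is_ball D" "is_ball D'" "g \<in> Sim D D'" shows "rep Sim D' = rep Sim D"
proof -
  have "restrict (inv_into D g) D' \<in> Sim D' D" using invS assms by blast
  then have "\<And>B. (is_ball B \<and> Sim B D' \<noteq> {}) = (is_ball B \<and> Sim B D \<noteq> {})"
    using compS assms by blast
  then show ?thesis unfolding rep_def by simp
qed

lemma ballD: "x \<noteq> y \<Longrightarrow> is_ball (cball (x::'a) (dist x y))"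
  unfolding is_ball_def by (intro exI[of _ x] exI[of _ "dist x y"]) auto

lemma simD: assumes "similarity B1 B2 h"
  obtains c where "c > 0" "h ` B1 = B2" "\<forall>a\<in>B1. \<forall>b\<in>B1. dist (h a) (h b) = c * dist a b"
  using assms unfolding similarity_def by blast

lemma cls_eq: assumes "x \<noteq> y" "u \<in> cball x (dist x y)" "v \<in> cball x (dist x y)"
  shows "cls (cball x (dist x y)) u = cls (cball x (dist x y)) v \<longleftrightarrow> dist u v < dist (x::'a) y"
proof
  assume h: "cls (cball x (dist x y)) u = cls (cball x (dist x y)) v"
  have "u \<in> cls (cball x (dist x y)) u" unfolding cls_def rad_eq using assms by simp
  then have "u \<in> cls (cball x (dist x y)) v" using h by simp
  then show "dist u v < dist x y" unfolding cls_def rad_eq by (simp add: dist_commute)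
next
  assume h: "dist u v < dist x y"
  have "\<And>w. dist u w < dist x y \<longleftrightarrow> dist v w < dist x y"
  proof -
    fix w
    have 1: "dist u w \<le> max (dist u v) (dist v w)" "dist v w \<le> max (dist v u) (dist u w)" using U by blast+
    show "dist u w < dist x y \<longleftrightarrow> dist v w < dist x y" using 1 h by (auto simp: dist_commute)
  qed
  then show "cls (cball x (dist x y)) u = cls (cball x (dist x y)) v" unfolding cls_def rad_eq by simp
qed

lemma key_eq: assumes "x \<noteq> y" "u \<in> cball x (dist x y)" "v \<in> cball x (dist x y)"
  shows "key Sim (cball x (dist x y)) u = key Sim (cball x (dist x y)) v \<longleftrightarrow> dist u v < dist (x::'a) y"
proof -
  define D where "D = cball x (dist x y)"
  have b: "is_ball D" unfolding D_def using ballD assms by blast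
  have "kmap Sim D \<in> Sim D (rep Sim D)" using k_in b by blast
  then have "similarity D (rep Sim D) (kmap Sim D)" using simB b rep_props by blast
  then obtain c where c: "c > 0" "\<forall>a\<in>D. \<forall>b\<in>D. dist (kmap Sim D a) (kmap Sim D b) = c * dist a b"
    by (rule simD)
  have inj: "inj_on (kmap Sim D) D"
  proof (rule inj_onI)
    fix a b assume ab: "a \<in> D" "b \<in> D" "kmap Sim D a = kmap Sim D b"
    have "dist (kmap Sim D a) (kmap Sim D b) = c * dist a b" using c(2) ab(1,2) by blast
    then have "c * dist a b = 0" using ab(3) by simp
    then show "a = b" using c(1) by simp
  qed
  have s: "cls D u \<subseteq> D" "cls D v \<subseteq> D" unfolding cls_def by auto
  have "key Sim D u = key Sim D v \<longleftrightarrow> cls D u = cls D v"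
    unfolding key_def by (rule inj_on_image_eq_iff[OF inj s])
  then show ?thesis using cls_eq[OF assms] unfolding D_def by simp
qed

lemma img: fixes g :: "'a \<Rightarrow> 'a" assumes "is_ball B2" "c > 0" "g ` B1 = B2" "\<forall>a\<in>B1. \<forall>b\<in>B1. dist (g a) (g b) = c * dist a b"
   "cball x (dist x y) \<subseteq> B1" "x \<in> B1" "y \<in> B1"
  shows "g ` cball x (dist x y) = cball (g x) (dist (g x) (g (y::'a)))"
proof
  show "g ` cball x (dist x y) \<subseteq> cball (g x) (dist (g x) (g y))"
  proof
    fix w assume "w \<in> g ` cball x (dist x y)"
    then obtain u where u: "u \<in> cball x (dist x y)" "w = g u" by blast
    then have "u \<in> B1" using assms(5) by blast
    then have "dist (g x) (g u) = c * dist x u" "dist (g x) (g y) = c * dist x y" using assms(4,6,7) by blast+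
    moreover have "dist x u \<le> dist x y" using u by simp
    ultimately show "w \<in> cball (g x) (dist (g x) (g y))" using u(2) assms(2) by simp
  qed
next
  show "cball (g x) (dist (g x) (g y)) \<subseteq> g ` cball x (dist x y)"
  proof
    fix w assume w: "w \<in> cball (g x) (dist (g x) (g y))"
    have "g x \<in> B2" "g y \<in> B2" using assms by auto
    then have "w \<in> B2" using ball_sub[OF assms(1) \<open>g x \<in> B2\<close> \<open>g y \<in> B2\<close>] w by blast
    then obtain u where u: "u \<in> B1" "w = g u" using assms by blast
    have "dist (g x) (g u) = c * dist x u" "dist (g x) (g y) = c * dist x y" using assms(4,6,7) u by blast+
    then have "c * dist x u \<le> c * dist x y" using w u by simp
    then have "dist x u \<le> dist x y" using assms(2) by simp
    then show "w \<in> g ` cball x (dist x y)" using u by auto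
  qed
qed

lemma inv_lt: assumes "is_ball B1" "is_ball B2" "\<gamma> \<in> Sim B1 B2" "x \<in> B1" "y \<in> B1"
  "lt Sim L x y" shows "lt Sim L (\<gamma> x) (\<gamma> (y::'a))"
proof -
  have xy: "x \<noteq> y" using assms(6) unfolding lt_def by blast
  obtain c where c: "c > 0" "\<gamma> ` B1 = B2" "\<forall>a\<in>B1. \<forall>b\<in>B1. dist (\<gamma> a) (\<gamma> b) = c * dist a b"
    using simB[OF assms(1-3)] by (rule simD)
  define D where "D = cball x (dist x y)"
  define D' where "D' = cball (\<gamma> x) (dist (\<gamma> x) (\<gamma> y))"
  have DB: "D \<subseteq> B1" unfolding D_def using ball_sub[OF assms(1,4,5)] .
  have im: "\<gamma> ` D = D'" unfolding D_def D'_def using img[OF assms(2) c DB[unfolded D_def] assms(4,5)] .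
  have dd: "dist (\<gamma> x) (\<gamma> y) = c * dist x y" using c(3) assms(4,5) by blast
  have "dist (\<gamma> x) (\<gamma> y) \<noteq> 0" using dd c xy by simp
  then have gxy: "\<gamma> x \<noteq> \<gamma> y" by auto
  have bD: "is_ball D" "is_ball D'" unfolding D_def D'_def using ballD xy gxy by auto
  have g': "restrict \<gamma> D \<in> Sim D D'" using resS[OF assms(1,2) bD(1) DB assms(3)] im by simp
  have R: "rep Sim D' = rep Sim D" using rep_cong[OF bD g'] .
  have rb: "is_ball (rep Sim D)" using rep_props[OF bD(1)] by blast
  have k: "kmap Sim D \<in> Sim D (rep Sim D)" using k_in bD by blast
  have k': "kmap Sim D' \<in> Sim D' (rep Sim D)" using k_in[OF bD(2)] R by simp
  have "compose D (kmap Sim D') (restrict \<gamma> D) \<in> Sim D (rep Sim D)"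
    using compS[OF bD(1) bD(2) rb g' k'] .
  then have eq: "compose D (kmap Sim D') (restrict \<gamma> D) = kmap Sim D"
    using single[OF bD(1) rb _ k] by blast
  have kk: "kmap Sim D v = kmap Sim D' (\<gamma> v)" if v: "v \<in> D" for v
  proof -
    have "kmap Sim D v = compose D (kmap Sim D') (restrict \<gamma> D) v" using eq by simp
    also have "\<dots> = kmap Sim D' (\<gamma> v)" using v unfolding compose_def by simp
    finally show ?thesis .
  qed
  have rD': "rad D' = c * dist x y" unfolding D'_def rad_eq by (rule dd)
  have rD: "rad D = dist x y" unfolding D_def rad_eq ..
  have cl: "cls D' (\<gamma> u) = \<gamma> ` cls D u" if u: "u \<in> D" for u
  proof -
    have sc: "dist (\<gamma> u) (\<gamma> v) = c * dist u v" if "v \<in> D" for v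
      using c(3) u that DB by blast
    show ?thesis unfolding cls_def rD rD'
    proof
      show "{w \<in> D'. dist (\<gamma> u) w < c * dist x y} \<subseteq> \<gamma> ` {v \<in> D. dist u v < dist x y}"
      proof
        fix w assume w: "w \<in> {w \<in> D'. dist (\<gamma> u) w < c * dist x y}"
        then obtain v where v: "v \<in> D" "w = \<gamma> v" using im by auto
        then have "c * dist u v < c * dist x y" using w sc by simp
        then have "dist u v < dist x y" using c(1) by simp
        then show "w \<in> \<gamma> ` {v \<in> D. dist u v < dist x y}" using v by blast
      qed
    next
      show "\<gamma> ` {v \<in> D. dist u v < dist x y} \<subseteq> {w \<in> D'. dist (\<gamma> u) w < c * dist x y}"
      proof
        fix w assume "w \<in> \<gamma> ` {v \<in> D. dist u v < dist x y}"
        then obtain v where v: "v \<in> D" "dist u v < dist x y" "w = \<gamma> v" by blast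
        then have "c * dist u v < c * dist x y" using c(1) by simp
        then show "w \<in> {w \<in> D'. dist (\<gamma> u) w < c * dist x y}" using v sc im by auto
      qed
    qed
  qed
  have ke: "key Sim D' (\<gamma> u) = key Sim D u" if u: "u \<in> D" for u
  proof -
    have "key Sim D' (\<gamma> u) = kmap Sim D' ` \<gamma> ` cls D u" unfolding key_def cl[OF u] ..
    also have "\<dots> = kmap Sim D ` cls D u" unfolding image_image
      by (rule image_cong) (auto simp: kk cls_def)
    finally show ?thesis unfolding key_def .
  qed
  have "x \<in> D" "y \<in> D" unfolding D_def by (auto simp: dist_commute)
  then have e1: "key Sim D' (\<gamma> x) = key Sim D x" "key Sim D' (\<gamma> y) = key Sim D y" using ke by auto
  have "key Sim D x \<noteq> key Sim D y \<and> (key Sim D x, key Sim D y) \<in> L"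
    using assms(6) unfolding lt_def D_def by blast
  then show ?thesis unfolding lt_def D'_def[symmetric] e1 using gxy by blast
qed

lemma recenter: assumes "u \<in> cball x r" shows "cball u r = cball (x::'a) r"
proof -
  have "x \<in> cball u r" using assms by (simp add: dist_commute)
  then show ?thesis using sub[OF assms order.refl] sub[of x u r r] by blast
qed

lemma key_neq: "x \<noteq> y \<Longrightarrow> key Sim (cball x (dist x y)) x \<noteq> key Sim (cball x (dist x y)) (y::'a)"
  using key_eq[of x y x y] by (simp add: dist_commute)

lemma ltI: "x \<noteq> y \<Longrightarrow> (key Sim (cball x (dist x y)) x, key Sim (cball x (dist x y)) (y::'a)) \<in> L
   \<Longrightarrow> lt Sim L x y"
  unfolding lt_def using key_neq by blast

lemma ltD: "lt Sim L x y \<Longrightarrow> x \<noteq> y \<and> (key Sim (cball x (dist x y)) x, key Sim (cball x (dist x y)) (y::'a)) \<in> L"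
  unfolding lt_def by blast

lemma lt_sym_form: "cball y (dist y x) = cball x (dist x (y::'a))"
  using swap[of x y] by (simp add: dist_commute)

context
  fixes L :: "'a set rel"
  assumes Ltot: "\<And>A B. A \<noteq> B \<Longrightarrow> (A, B) \<in> L \<or> (B, A) \<in> L"
    and Lanti: "\<And>A B. (A, B) \<in> L \<Longrightarrow> (B, A) \<in> L \<Longrightarrow> A = B"
    and Ltrans: "\<And>A B C. (A, B) \<in> L \<Longrightarrow> (B, C) \<in> L \<Longrightarrow> (A, C) \<in> L"
begin

lemma lt_total: assumes "x \<noteq> (y::'a)" shows "lt Sim L x y \<or> lt Sim L y x"
proof -
  have e: "cball y (dist y x) = cball x (dist x y)" by (rule lt_sym_form)
  have "(key Sim (cball x (dist x y)) x, key Sim (cball x (dist x y)) y) \<in> L \<or>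
        (key Sim (cball x (dist x y)) y, key Sim (cball x (dist x y)) x) \<in> L"
    using Ltot[OF key_neq[OF assms]] .
  then show ?thesis
  proof
    assume "(key Sim (cball x (dist x y)) x, key Sim (cball x (dist x y)) y) \<in> L"
    then show ?thesis using ltI[where L=L, OF assms] by blast
  next
    assume "(key Sim (cball x (dist x y)) y, key Sim (cball x (dist x y)) x) \<in> L"
    then have "(key Sim (cball y (dist y x)) y, key Sim (cball y (dist y x)) x) \<in> L" unfolding e .
    then show ?thesis using ltI[where L=L, of y x] assms by blast
  qed
qed

lemma lt_asym: assumes "lt Sim L x (y::'a)" "lt Sim L y x" shows False
proof -
  have e: "cball y (dist y x) = cball x (dist x y)" by (rule lt_sym_form)
  have 1: "x \<noteq> y" "(key Sim (cball x (dist x y)) x, key Sim (cball x (dist x y)) y) \<in> L"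
    using ltD[OF assms(1)] by auto
  have "(key Sim (cball y (dist y x)) y, key Sim (cball y (dist y x)) x) \<in> L"
    using ltD[OF assms(2)] by auto
  then have 2: "(key Sim (cball x (dist x y)) y, key Sim (cball x (dist x y)) x) \<in> L" unfolding e .
  have "key Sim (cball x (dist x y)) x = key Sim (cball x (dist x y)) y" using Lanti[OF 1(2) 2] .
  then show False using key_neq[OF 1(1)] by simp
qed

lemma lt_trans: assumes "lt Sim L x y" "lt Sim L y (z::'a)" shows "lt Sim L x z"
proof -
  have xy: "x \<noteq> y" using ltD[OF assms(1)] by simp
  have yz: "y \<noteq> z" using ltD[OF assms(2)] by simp
  have xz: "x \<noteq> z"
  proof
    assume "x = z" then show False using lt_asym assms by simp
  qed
  define d1 where "d1 = dist x y"
  define d2 where "d2 = dist y z"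
  have L1: "(key Sim (cball x d1) x, key Sim (cball x d1) y) \<in> L" using ltD[OF assms(1)] d1_def by simp
  have L2: "(key Sim (cball y d2) y, key Sim (cball y d2) z) \<in> L" using ltD[OF assms(2)] d2_def by simp
  have u1: "dist x z \<le> max d1 d2" using U[of x z y] d1_def d2_def by simp
  have u2: "d2 \<le> max d1 (dist x z)" using U[of y z x] d1_def d2_def by (simp add: dist_commute)
  have u3: "d1 \<le> max (dist x z) d2" using U[of x y z] d1_def d2_def by (simp add: dist_commute)
  consider "d1 = d2" | "d1 < d2" | "d2 < d1" by linarith
  then show ?thesis
  proof cases
    case 1
    define D where "D = cball y d2"
    have DX: "cball x d1 = D" unfolding D_def 1[symmetric] d1_def using swap[of x y] by simp
    have k1: "key Sim D x \<noteq> key Sim D y" "key Sim D y \<noteq> key Sim D z"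
      using key_neq[of x y] key_neq[of y z] DX d1_def d2_def D_def xy yz by auto
    have A: "(key Sim D x, key Sim D y) \<in> L" "(key Sim D y, key Sim D z) \<in> L" using L1 L2 DX D_def by auto
    have kxz: "key Sim D x \<noteq> key Sim D z" using A Lanti k1 by metis
    have mem: "x \<in> D" "z \<in> D" unfolding D_def using 1 d1_def d2_def by (auto simp: dist_commute)
    have "\<not> dist x z < d2" using key_eq[OF yz, of x z] mem kxz unfolding D_def d2_def by blast
    then have e: "dist x z = d2" using u1 1 by simp
    have DZ: "cball x (dist x z) = D" unfolding e using DX 1 by simp
    show ?thesis using ltI[where L=L, OF xz] Ltrans[OF A] DZ by simp
  next
    case 2
    have e: "dist x z = d2" using u1 u2 2 by simp
    have DZ: "cball x (dist x z) = cball y (dist y z)"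
      using swap[of x z] swap[of y z] e d2_def by simp
    have mem: "x \<in> cball y (dist y z)" "y \<in> cball y (dist y z)" using 2 d1_def d2_def by (auto simp: dist_commute)
    have "key Sim (cball y (dist y z)) x = key Sim (cball y (dist y z)) y"
      using key_eq[OF yz mem] 2 d1_def d2_def by simp
    then show ?thesis using ltI[where L=L, OF xz] L2 DZ d2_def by simp
  next
    case 3
    have e: "dist x z = d1" using u1 u3 3 by simp
    have mem: "y \<in> cball x (dist x y)" "z \<in> cball x (dist x y)" using 3 e d1_def d2_def by (auto simp: dist_commute)
    have "key Sim (cball x (dist x y)) y = key Sim (cball x (dist x y)) z"
      using key_eq[OF xy mem] 3 d1_def d2_def by simp
    then show ?thesis using ltI[where L=L, OF xz] L1 e d1_def by simp
  qed
qed

lemma lin: "linear_order {(x, y::'a). x = y \<or> lt Sim L x y}"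
  unfolding linear_order_on_def partial_order_on_def preorder_on_def
proof (intro conjI)
  show "refl_on UNIV {(x, y::'a). x = y \<or> lt Sim L x y}" unfolding refl_on_def by auto
  show "trans {(x, y::'a). x = y \<or> lt Sim L x y}" unfolding trans_def
  proof (intro allI impI)
    fix x y z :: 'a
    assume "(x, y) \<in> {(x, y). x = y \<or> lt Sim L x y}" "(y, z) \<in> {(x, y). x = y \<or> lt Sim L x y}"
    then have "x = y \<or> lt Sim L x y" "y = z \<or> lt Sim L y z" by auto
    then show "(x, z) \<in> {(x, y). x = y \<or> lt Sim L x y}" using lt_trans by auto
  qed
  show "antisym {(x, y::'a). x = y \<or> lt Sim L x y}" unfolding antisym_def
  proof (intro allI impI)
    fix x y :: 'a
    assume "(x, y) \<in> {(x, y). x = y \<or> lt Sim L x y}" "(y, x) \<in> {(x, y). x = y \<or> lt Sim L x y}"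
    then have "x = y \<or> lt Sim L x y" "y = x \<or> lt Sim L y x" by auto
    then show "x = y" using lt_asym by blast
  qed
  show "total_on UNIV {(x, y::'a). x = y \<or> lt Sim L x y}" unfolding total_on_def
    using lt_total by auto
qed (simp add: subset_iff)

end

end

lemma Lprops:
  obtains L :: "'b set rel" where "\<And>A B. A \<noteq> B \<Longrightarrow> (A, B) \<in> L \<or> (B, A) \<in> L"
    "\<And>A B. (A, B) \<in> L \<Longrightarrow> (B, A) \<in> L \<Longrightarrow> A = B"
    "\<And>A B C. (A, B) \<in> L \<Longrightarrow> (B, C) \<in> L \<Longrightarrow> (A, C) \<in> L"
proof -
  obtain L :: "'b set rel" where L0: "Well_order L \<and> Field L = UNIV" using well_ordering by (rule exE)
  have L: "Well_order L" "Field L = UNIV" using L0 by (rule conjunct1, rule conjunct2)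
  have "well_order_on UNIV L" using L(1) unfolding L(2) .
  then have lo: "linear_order_on UNIV L" unfolding well_order_on_def by (rule conjunct1)
  have po: "partial_order_on UNIV L" using lo unfolding linear_order_on_def by (rule conjunct1)
  have tot: "total_on UNIV L" using lo unfolding linear_order_on_def by (rule conjunct2)
  have an: "antisym L" using partial_order_onD(3)[OF po] .
  have tr: "trans L" using partial_order_onD(2)[OF po] .
  have t: "(A, B) \<in> L \<or> (B, A) \<in> L" if "A \<noteq> B" for A B
    using tot that unfolding total_on_def by blast
  have a: "A = B" if "(A, B) \<in> L" "(B, A) \<in> L" for A B
    using an that by (rule antisymD)
  have c: "(A, C) \<in> L" if "(A, B) \<in> L" "(B, C) \<in> L" for A B C
    using tr that by (rule transD)
  show ?thesis by (rule that[OF t a c])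
qed

theorem lemma9p14:
  fixes Sim :: "'a::metric_space set \<Rightarrow> 'a set \<Rightarrow> ('a \<Rightarrow> 'a) set"
  assumes "compact (UNIV :: 'a set)"
    and "ultrametric_space TYPE('a)"
    and "finite_similarity_structure Sim"
    and "\<And>B1 B2. is_ball B1 \<Longrightarrow> is_ball B2 \<Longrightarrow> card (Sim B1 B2) \<le> 1"
  shows "\<exists>r :: ('a \<times> 'a) set. linear_order r \<and>
           (\<forall>B1 B2 \<gamma>. is_ball B1 \<and> is_ball B2 \<and> \<gamma> \<in> Sim B1 B2 \<longrightarrow>
              (\<forall>x\<in>B1. \<forall>y\<in>B1. (x, y) \<in> r \<longrightarrow> (\<gamma> x, \<gamma> y) \<in> r))"
proof -
  interpret ctx Sim
    apply unfold_locales
      apply (rule assms(2))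
     apply (rule assms(3))
    by (rule assms(4))
  obtain L :: "'a set rel" where L: "\<And>A B. A \<noteq> B \<Longrightarrow> (A, B) \<in> L \<or> (B, A) \<in> L"
    "\<And>A B. (A, B) \<in> L \<Longrightarrow> (B, A) \<in> L \<Longrightarrow> A = B"
    "\<And>A B C. (A, B) \<in> L \<Longrightarrow> (B, C) \<in> L \<Longrightarrow> (A, C) \<in> L"
  proof (rule Lprops)
    fix L :: "'a set rel"
    assume "\<And>A B. A \<noteq> B \<Longrightarrow> (A, B) \<in> L \<or> (B, A) \<in> L"
      "\<And>A B. (A, B) \<in> L \<Longrightarrow> (B, A) \<in> L \<Longrightarrow> A = B"
      "\<And>A B C. (A, B) \<in> L \<Longrightarrow> (B, C) \<in> L \<Longrightarrow> (A, C) \<in> L"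
    then show thesis by (rule that)
  qed
  show ?thesis
  proof (intro exI conjI allI impI ballI)
    show "linear_order {(x, y). x = y \<or> lt Sim L x y}" using lin[OF L] .
  next
    fix B1 B2 \<gamma> x y
    assume h: "is_ball B1 \<and> is_ball B2 \<and> \<gamma> \<in> Sim B1 B2" "x \<in> B1" "y \<in> B1"
      "(x, y) \<in> {(x, y). x = y \<or> lt Sim L x y}"
    show "(\<gamma> x, \<gamma> y) \<in> {(x, y). x = y \<or> lt Sim L x y}"
    proof (cases "x = y")
      case True then show ?thesis by simp
    next
      case False
      then have "lt Sim L x y" using h(4) by simp
      then have "lt Sim L (\<gamma> x) (\<gamma> y)" using inv_lt[of B1 B2 \<gamma> x y L] h(1,2,3) by blast
      then show ?thesis by simp
    qed
  qed
qed

end
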